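(* For any density operators $\varrho,\sigma$ on a finite-dimensional Hilbert space and any $\alpha,\beta\in(0,1)$, \[ D_\alpha(\varrho\|\sigma)\ge\frac{\alpha(1-\beta)}{\alpha-2\alpha\beta+\beta}D_\beta(\varrho\|\sigma). \]
   Context: $D_\alpha(\varrho\|\sigma)=\frac{1}{\alpha-1}\log\operatorname{Tr}\varrho^\alpha\sigma^{1-\alpha}$ is the Petz-type Rényi divergence for $\alpha\in(0,1)$ (real powers taken on the support; $+\infty$ if the trace is $0$). *)

theory Defs
  imports Complex_Main "HOL-Library.Extended_Real" "Jordan_Normal_Form.Matrix"
begin

text \<open>Complex n x n matrices as operators on the Hilbert space C^n.\<close>

definition adj :: "complex mat \<Rightarrow> complex mat" where
  "adj A = mat (dim_col A) (dim_row A) (\<lambda>(i,j). cnj (A $$ (j,i)))"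

definition hermitian_mat :: "nat \<Rightarrow> complex mat \<Rightarrow> bool" where
  "hermitian_mat n A \<longleftrightarrow> A \<in> carrier_mat n n \<and> adj A = A"

definition psd_mat :: "nat \<Rightarrow> complex mat \<Rightarrow> bool" where
  "psd_mat n A \<longleftrightarrow> hermitian_mat n A \<and>
     (\<forall>v \<in> carrier_vec n. (\<Sum>i<n. cnj (v $ i) * (A *\<^sub>v v) $ i) \<in> \<real> \<and>
                           0 \<le> Re (\<Sum>i<n. cnj (v $ i) * (A *\<^sub>v v) $ i))"

definition mtrace :: "complex mat \<Rightarrow> complex" where
  "mtrace A = (\<Sum>i<dim_row A. A $$ (i,i))"

definition density_mat :: "nat \<Rightarrow> complex mat \<Rightarrow> bool" where
  "density_mat n A \<longleftrightarrow> psd_mat n A \<and> mtrace A = 1"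

definition unitary_mat :: "nat \<Rightarrow> complex mat \<Rightarrow> bool" where
  "unitary_mat n U \<longleftrightarrow> U \<in> carrier_mat n n \<and> adj U * U = 1\<^sub>m n"

definition real_diag :: "nat \<Rightarrow> (nat \<Rightarrow> real) \<Rightarrow> complex mat" where
  "real_diag n d = mat n n (\<lambda>(i,j). if i = j then complex_of_real (d i) else 0)"

text \<open>Real power of a positive semidefinite matrix, taken on its support:
  with a spectral decomposition A = U diag(d) U*, the power is U diag(d') U*
  where d'_i = d_i powr p if d_i > 0 and 0 otherwise.\<close>
definition mat_powr :: "nat \<Rightarrow> complex mat \<Rightarrow> real \<Rightarrow> complex mat" where
  "mat_powr n A p = (SOME B. \<exists>U d. unitary_mat n U \<and> A = U * real_diag n d * adj U \<and>
      B = U * real_diag n (\<lambda>i. if d i > 0 then d i powr p else 0) * adj U)"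

definition petz_renyi :: "nat \<Rightarrow> real \<Rightarrow> complex mat \<Rightarrow> complex mat \<Rightarrow> ereal" where
  "petz_renyi n \<alpha> \<rho> \<sigma> =
     (let t = Re (mtrace (mat_powr n \<rho> \<alpha> * mat_powr n \<sigma> (1 - \<alpha>)))
      in if t = 0 then \<infinity> else ereal (ln t / (\<alpha> - 1)))"

end

theory Submission imports Defs "Jordan_Normal_Form.Spectral_Radius" "HOL-Analysis.Convex" begin

lemma adj_dims[simp]: "dim_row (adj A) = dim_col A" "dim_col (adj A) = dim_row A"
  unfolding adj_def by auto

lemma adj_carrier[simp]: "A \<in> carrier_mat n m \<Longrightarrow> adj A \<in> carrier_mat m n"
  unfolding adj_def by auto

lemma adj_index[simp]: "i < dim_col A \<Longrightarrow> j < dim_row A \<Longrightarrow> adj A $$ (i,j) = cnj (A $$ (j,i))"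
  unfolding adj_def by auto

lemma adj_adj[simp]: "adj (adj A) = A"
  by (rule eq_matI) auto

lemma adj_mult:
  assumes "A \<in> carrier_mat n m" "B \<in> carrier_mat m k"
  shows "adj (A * B) = adj B * adj A"
proof (rule eq_matI)
  fix i j assume ij: "i < dim_row (adj B * adj A)" "j < dim_col (adj B * adj A)"
  then show "adj (A * B) $$ (i, j) = (adj B * adj A) $$ (i, j)"
    using assms by (simp add: scalar_prod_def row_def col_def mult.commute)
qed (use assms in auto)

lemma adj_one[simp]: "adj (1\<^sub>m n) = 1\<^sub>m n"
  by (rule eq_matI) auto

lemma unitary_right:
  assumes "unitary_mat n U" shows "U * adj U = 1\<^sub>m n"
  using assms mat_mult_left_right_inverse[of "adj U" n U] unfolding unitary_mat_def by auto

lemma unitary_adj: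
  assumes "unitary_mat n U" shows "unitary_mat n (adj U)"
  using unitary_right[OF assms] assms unfolding unitary_mat_def by auto

lemma unitary_one: "unitary_mat n (1\<^sub>m n)"
  unfolding unitary_mat_def by simp

definition orthcols :: "nat \<Rightarrow> nat \<Rightarrow> complex mat \<Rightarrow> bool" where
  "orthcols n k M \<longleftrightarrow> (\<forall>j<k. \<forall>j'<k. (\<Sum>i<n. cnj (M $$ (i,j)) * M $$ (i,j')) = (if j = j' then 1 else 0))"

lemma unitary_iff_orthcols:
  assumes "M \<in> carrier_mat n n"
  shows "unitary_mat n M \<longleftrightarrow> orthcols n n M"
proof -
  have "(adj M * M = 1\<^sub>m n) \<longleftrightarrow> (\<forall>j<n. \<forall>j'<n. (adj M * M) $$ (j,j') = 1\<^sub>m n $$ (j,j'))"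
  proof
    assume "adj M * M = 1\<^sub>m n" then show "\<forall>j<n. \<forall>j'<n. (adj M * M) $$ (j,j') = 1\<^sub>m n $$ (j,j')" by simp
  next
    assume "\<forall>j<n. \<forall>j'<n. (adj M * M) $$ (j,j') = 1\<^sub>m n $$ (j,j')"
    then show "adj M * M = 1\<^sub>m n" using assms by (intro eq_matI) auto
  qed
  moreover have "(adj M * M) $$ (j,j') = (\<Sum>i<n. cnj (M $$ (i,j)) * M $$ (i,j'))" if "j<n" "j'<n" for j j'
    using assms that by (simp add: scalar_prod_def row_def col_def lessThan_atLeast0)
  ultimately have "(adj M * M = 1\<^sub>m n) \<longleftrightarrow> orthcols n n M"
    unfolding orthcols_def by (simp add: index_one_mat)
  then show ?thesis unfolding unitary_mat_def using assms by auto
qed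

lemma exists_orth_vec:
  fixes M :: "complex mat"
  assumes M: "M \<in> carrier_mat n n" and k: "k < n"
  shows "\<exists>x. x \<in> carrier_vec n \<and> x \<noteq> 0\<^sub>v n \<and> (\<forall>j<k. (\<Sum>i<n. cnj (M $$ (i,j)) * x $ i) = 0)"
proof -
  define R where "R = mat n n (\<lambda>(j,i). if j < k then cnj (M $$ (i,j)) else 0)"
  have R: "R \<in> carrier_mat n n" unfolding R_def by simp
  have "R = mat\<^sub>r n n (\<lambda>i. if i = n-1 then 0\<^sub>v n else row R i)"
    by (rule eq_matI) (use k in \<open>auto simp: R_def\<close>)
  moreover have "det (mat\<^sub>r n n (\<lambda>i. if i = n-1 then 0\<^sub>v n else row R i)) = 0"
    by (rule det_row_0) (use k R in auto)
  ultimately have "det R = 0" by simp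
  then obtain x where x: "x \<in> carrier_vec n" "x \<noteq> 0\<^sub>v n" "R *\<^sub>v x = 0\<^sub>v n"
    using det_0_iff_vec_prod_zero[OF R] by auto
  have "(\<Sum>i<n. cnj (M $$ (i,j)) * x $ i) = 0" if j: "j < k" for j
  proof -
    have "(R *\<^sub>v x) $ j = 0" using x j k by simp
    moreover have "(R *\<^sub>v x) $ j = (\<Sum>i<n. cnj (M $$ (i,j)) * x $ i)"
      using j k x(1) unfolding R_def by (simp add: scalar_prod_def row_def lessThan_atLeast0)
    ultimately show ?thesis by simp
  qed
  then show ?thesis using x by blast
qed


lemma normalize_vec:
  fixes x :: "complex vec"
  assumes x: "x \<in> carrier_vec n" "x \<noteq> 0\<^sub>v n"
  shows "\<exists>r::real. (0::real) < r \<and> (\<Sum>i<n. cnj (x $ i / complex_of_real r) * (x $ i / complex_of_real r)) = 1"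
proof -
  define S where "S = (\<Sum>i<n. (cmod (x $ i))^2)"
  obtain i0 where i0: "i0 < n" "x $ i0 \<noteq> 0" using x by (metis eq_vecI carrier_vecD index_zero_vec)
  have "S \<ge> (cmod (x $ i0))^2" unfolding S_def
    by (rule member_le_sum) (use i0 in auto)
  moreover have "(cmod (x $ i0))^2 > 0" using i0 by simp
  ultimately have Sp: "S > 0" by linarith
  define r where "r = sqrt S"
  have rp: "r > 0" unfolding r_def using Sp by simp
  have "(\<Sum>i<n. cnj (x $ i / r) * (x $ i / r)) = (\<Sum>i<n. complex_of_real ((cmod (x $ i))^2) / complex_of_real (r^2))"
  proof (rule sum.cong)
    fix i
    have "cnj (x $ i) * x $ i = complex_of_real ((cmod (x $ i))^2)"
      by (metis complex_norm_square mult.commute)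
    then show "cnj (x $ i / r) * (x $ i / r) = complex_of_real ((cmod (x $ i))^2) / complex_of_real (r^2)"
      by (simp add: power2_eq_square)
  qed simp
  also have "\<dots> = complex_of_real (S / r^2)" unfolding S_def
    by (simp add: sum_divide_distrib)
  also have "\<dots> = 1" unfolding r_def using Sp by simp
  finally show ?thesis using rp by blast
qed

lemma orth_add_col:
  assumes M: "M \<in> carrier_mat n n" and o: "orthcols n k M" and k: "k < n"
    and yn: "(\<Sum>i<n. cnj (y i) * y i) = 1"
    and yo: "\<And>j. j<k \<Longrightarrow> (\<Sum>i<n. cnj (M $$ (i,j)) * y i) = 0"
  shows "orthcols n (Suc k) (mat n n (\<lambda>(i,j). if j < k then M $$ (i,j) else if j = k then y i else 0))"
proof -
  define M' where "M' = mat n n (\<lambda>(i,j). if j < k then M $$ (i,j) else if j = k then y i else 0)"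
  have yo': "(\<Sum>i<n. cnj (y i) * M $$ (i,j)) = 0" if j: "j < k" for j
  proof -
    have "(\<Sum>i<n. cnj (y i) * M $$ (i,j)) = cnj (\<Sum>i<n. cnj (M $$ (i,j)) * y i)"
      by (simp add: mult.commute)
    then show ?thesis using yo[OF j] by simp
  qed
  have "orthcols n (Suc k) M'"
    unfolding orthcols_def
  proof (intro allI impI)
    fix j j' assume j: "j < Suc k" and j': "j' < Suc k"
    have e1: "(\<Sum>i<n. cnj (M' $$ (i,j)) * M' $$ (i,j')) =
      (\<Sum>i<n. cnj (if j < k then M $$ (i,j) else y i) * (if j' < k then M $$ (i,j') else y i))"
      by (rule sum.cong) (use j j' k in \<open>auto simp: M'_def\<close>)
    show "(\<Sum>i<n. cnj (M' $$ (i,j)) * M' $$ (i,j')) = (if j = j' then 1 else 0)"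
      unfolding e1 using o j j' yo yo' yn unfolding orthcols_def
      by (cases "j < k"; cases "j' < k") auto
  qed
  then show ?thesis unfolding M'_def .
qed

lemma orth_extend_step:
  assumes M: "M \<in> carrier_mat n n" and o: "orthcols n k M" and k: "k < n"
  shows "\<exists>M'. M' \<in> carrier_mat n n \<and> orthcols n (Suc k) M' \<and> (\<forall>i<n. \<forall>j<k. M' $$ (i,j) = M $$ (i,j))"
proof -
  obtain x where x: "x \<in> carrier_vec n" "x \<noteq> 0\<^sub>v n" and xo: "\<And>j. j<k \<Longrightarrow> (\<Sum>i<n. cnj (M $$ (i,j)) * x $ i) = 0"
    using exists_orth_vec[OF M k] by blast
  obtain r :: real where r: "(0::real) < r" and rn: "(\<Sum>i<n. cnj (x $ i / complex_of_real r) * (x $ i / complex_of_real r)) = 1"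
    using normalize_vec[OF x] by blast
  define y where "y = (\<lambda>i. x $ i / complex_of_real r)"
  have yo: "(\<Sum>i<n. cnj (M $$ (i,j)) * y i) = 0" if j: "j < k" for j
  proof -
    have "(\<Sum>i<n. cnj (M $$ (i,j)) * y i) = (\<Sum>i<n. cnj (M $$ (i,j)) * x $ i) / complex_of_real r"
      unfolding y_def by (simp add: sum_divide_distrib)
    then show ?thesis using xo[OF j] by simp
  qed
  define M' where "M' = mat n n (\<lambda>(i,j). if j < k then M $$ (i,j) else if j = k then y i else 0)"
  have "orthcols n (Suc k) M'" unfolding M'_def
    by (rule orth_add_col[OF M o k]) (use rn yo in \<open>auto simp: y_def\<close>)
  moreover have "M' \<in> carrier_mat n n" unfolding M'_def by simp
  moreover have "\<forall>i<n. \<forall>j<k. M' $$ (i,j) = M $$ (i,j)" unfolding M'_def using k by auto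
  ultimately show ?thesis by blast
qed

lemma orth_extend:
  assumes "M \<in> carrier_mat n n" "orthcols n k M" "k \<le> n"
  shows "\<exists>W. unitary_mat n W \<and> (\<forall>i<n. \<forall>j<k. W $$ (i,j) = M $$ (i,j))"
  using assms
proof (induction "n - k" arbitrary: k M)
  case 0
  then have "k = n" by simp
  then show ?case using 0 unitary_iff_orthcols[of M n] by blast
next
  case (Suc m)
  then have k: "k < n" by simp
  obtain M' where M': "M' \<in> carrier_mat n n" "orthcols n (Suc k) M'" "\<forall>i<n. \<forall>j<k. M' $$ (i,j) = M $$ (i,j)"
    using orth_extend_step[OF Suc(3) Suc(4) k] by blast
  have "m = n - Suc k" using Suc(2) by simp
  from Suc(1)[OF this M'(1) M'(2)] k obtain W where
    W: "unitary_mat n W" "\<forall>i<n. \<forall>j<Suc k. W $$ (i,j) = M' $$ (i,j)" by auto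
  then show ?case using M'(3) by auto
qed


lemma sum_shift_zero:
  fixes f :: "nat \<Rightarrow> 'a::comm_monoid_add"
  assumes "k \<le> n" "\<And>m. m < k \<Longrightarrow> f m = 0"
  shows "(\<Sum>m<n. f m) = (\<Sum>j<n-k. f (j+k))"
proof -
  have "(\<Sum>m<n. f m) = (\<Sum>m\<in>{k..<n}. f m)"
    by (rule sum.mono_neutral_right) (use assms in auto)
  also have "\<dots> = (\<Sum>m\<in>{0+k..<(n-k)+k}. f m)" using assms by simp
  also have "\<dots> = (\<Sum>j\<in>{0..<n-k}. f (j+k))" by (rule sum.shift_bounds_nat_ivl)
  finally show ?thesis by (simp add: lessThan_atLeast0)
qed

lemma col_mult_eq: "i < dim_row A \<Longrightarrow> j < dim_col B \<Longrightarrow> (A * B) $$ (i,j) = (A *\<^sub>v col B j) $ i"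
  by simp

lemma eig_step:
  assumes A: "hermitian_mat n A" and W: "unitary_mat n W" and k: "k < n"
    and eig: "\<And>j. j<k \<Longrightarrow> A *\<^sub>v col W j = lam j \<cdot>\<^sub>v col W j"
  shows "\<exists>W' lam'. unitary_mat n W' \<and> (\<forall>j<Suc k. A *\<^sub>v col W' j = lam' j \<cdot>\<^sub>v col W' j)"
proof -
  have Ac: "A \<in> carrier_mat n n" and adjA: "adj A = A" using A unfolding hermitian_mat_def by auto
  have Wc: "W \<in> carrier_mat n n" and WW: "adj W * W = 1\<^sub>m n" using W unfolding unitary_mat_def by auto
  have WW': "W * adj W = 1\<^sub>m n" by (rule unitary_right[OF W])
  have oW: "orthcols n n W" using unitary_iff_orthcols[OF Wc] W by simp
  define C where "C = adj W * A * W"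
  have Cc: "C \<in> carrier_mat n n" unfolding C_def using Ac Wc by auto
  have AWe: "(A * W) $$ (t,l) = lam l * W $$ (t,l)" if "t < n" "l < k" for t l
  proof -
    have "(A * W) $$ (t,l) = (A *\<^sub>v col W l) $ t" using that k Ac Wc by simp
    also have "\<dots> = lam l * W $$ (t,l)" using eig[of l] that k Wc by simp
    finally show ?thesis .
  qed
  have Czero: "C $$ (l,m) = 0" if l: "l < k" and m: "k \<le> m" "m < n" for l m
  proof -
    have "C = adj (A * W) * W" unfolding C_def using adj_mult[OF Ac Wc] adjA by simp
    then have "C $$ (l,m) = (\<Sum>t<n. cnj ((A * W) $$ (t,l)) * W $$ (t,m))"
      using l m k Ac Wc by (simp add: scalar_prod_def row_def col_def lessThan_atLeast0)
    also have "\<dots> = (\<Sum>t<n. cnj (lam l) * (cnj (W $$ (t,l)) * W $$ (t,m)))"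
      by (rule sum.cong) (use AWe l in auto)
    also have "\<dots> = cnj (lam l) * (\<Sum>t<n. cnj (W $$ (t,l)) * W $$ (t,m))"
      by (simp add: sum_distrib_left)
    also have "\<dots> = 0" using oW l m k unfolding orthcols_def by auto
    finally show ?thesis .
  qed
  define D where "D = mat (n-k) (n-k) (\<lambda>(i,j). C $$ (i+k, j+k))"
  have Dc: "D \<in> carrier_mat (n-k) (n-k)" unfolding D_def by simp
  obtain \<mu> where "eigenvalue D \<mu>" using spectrum_non_empty[OF Dc] k unfolding spectrum_def by auto
  then obtain y where y: "y \<in> carrier_vec (n-k)" "y \<noteq> 0\<^sub>v (n-k)" "D *\<^sub>v y = \<mu> \<cdot>\<^sub>v y"
    unfolding eigenvalue_def eigenvector_def using Dc by auto
  define z where "z = vec n (\<lambda>i. if i < k then 0 else y $ (i-k))"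
  have zc: "z \<in> carrier_vec n" unfolding z_def by simp
  have Cz: "C *\<^sub>v z = \<mu> \<cdot>\<^sub>v z"
  proof (rule eq_vecI)
    fix l assume "l < dim_vec (\<mu> \<cdot>\<^sub>v z)"
    then have l: "l < n" unfolding z_def by simp
    have "(C *\<^sub>v z) $ l = (\<Sum>m<n. C $$ (l,m) * z $ m)"
      using l Cc zc by (simp add: scalar_prod_def row_def lessThan_atLeast0)
    also have "\<dots> = (\<Sum>j<n-k. C $$ (l,j+k) * z $ (j+k))"
      by (rule sum_shift_zero) (use k in \<open>auto simp: z_def\<close>)
    also have "\<dots> = (\<Sum>j<n-k. C $$ (l,j+k) * y $ j)"
      by (rule sum.cong) (auto simp: z_def)
    also have "\<dots> = \<mu> * z $ l"
    proof (cases "l < k")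
      case True
      then show ?thesis using Czero by (simp add: z_def l)
    next
      case False
      have "(D *\<^sub>v y) $ (l-k) = (\<Sum>j<n-k. C $$ (l,j+k) * y $ j)"
        using False l y(1) by (simp add: D_def scalar_prod_def row_def lessThan_atLeast0)
      then show ?thesis using y(3) False l y(1) by (simp add: z_def)
    qed
    finally show "(C *\<^sub>v z) $ l = (\<mu> \<cdot>\<^sub>v z) $ l" using l zc by simp
  qed (use Cc zc in simp)
  define x where "x = W *\<^sub>v z"
  have xc: "x \<in> carrier_vec n" unfolding x_def using Wc zc by simp
  have AW: "A * W = W * C"
  proof -
    have "W * C = W * (adj W * A * W)" unfolding C_def ..
    also have "\<dots> = (W * adj W) * A * W"
    proof -
      have aW: "adj W \<in> carrier_mat n n" using Wc by simp
      have AWc: "A * W \<in> carrier_mat n n" using Ac Wc by simp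
      have WaW: "W * adj W \<in> carrier_mat n n" using aW Wc by simp
      have "adj W * A * W = adj W * (A * W)" by (rule assoc_mult_mat[OF aW Ac Wc])
      then have "W * (adj W * A * W) = (W * adj W) * (A * W)" using assoc_mult_mat[OF Wc aW AWc] by simp
      also have "\<dots> = (W * adj W) * A * W" using assoc_mult_mat[OF WaW Ac Wc] by simp
      finally show ?thesis .
    qed
    also have "\<dots> = A * W" using WW' Ac by simp
    finally show ?thesis by simp
  qed
  have Ax: "A *\<^sub>v x = \<mu> \<cdot>\<^sub>v x"
  proof -
    have "A *\<^sub>v x = (A * W) *\<^sub>v z" unfolding x_def using Ac Wc zc by simp
    also have "\<dots> = W *\<^sub>v (C *\<^sub>v z)" unfolding AW using Wc Cc zc by simp
    also have "\<dots> = \<mu> \<cdot>\<^sub>v x" unfolding Cz x_def using Wc zc by (simp add: mult_mat_vec)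
    finally show ?thesis .
  qed
  have zx: "adj W *\<^sub>v x = z"
  proof -
    have aW: "adj W \<in> carrier_mat n n" using Wc by simp
    have "adj W *\<^sub>v x = (adj W * W) *\<^sub>v z" unfolding x_def using assoc_mult_mat_vec[OF aW Wc zc] by simp
    then show ?thesis using WW zc by simp
  qed
  have xnz: "x \<noteq> 0\<^sub>v n"
  proof
    assume x0: "x = 0\<^sub>v n"
    obtain j where j: "j < n-k" "y $ j \<noteq> 0" using y(1,2) by (metis eq_vecI carrier_vecD index_zero_vec)
    have "z $ (j+k) \<noteq> 0" using j unfolding z_def by simp
    moreover have "adj W *\<^sub>v 0\<^sub>v n = 0\<^sub>v n" using Wc by (intro eq_vecI) (auto simp: scalar_prod_def)
    then have "z = 0\<^sub>v n" using zx x0 by simp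
    ultimately show False using j by simp
  qed
  have xo: "(\<Sum>i<n. cnj (W $$ (i,j)) * x $ i) = 0" if j: "j < k" for j
  proof -
    have "(adj W *\<^sub>v x) $ j = (\<Sum>i<n. cnj (W $$ (i,j)) * x $ i)"
      using j k Wc xc by (simp add: scalar_prod_def row_def lessThan_atLeast0)
    then show ?thesis using zx j k unfolding z_def by simp
  qed
  obtain r :: real where r: "(0::real) < r" and rn: "(\<Sum>i<n. cnj (x $ i / complex_of_real r) * (x $ i / complex_of_real r)) = 1"
    using normalize_vec[OF xc xnz] by blast
  define v where "v = (1 / complex_of_real r) \<cdot>\<^sub>v x"
  have vc: "v \<in> carrier_vec n" unfolding v_def using xc by simp
  have vi: "v $ i = x $ i / complex_of_real r" if "i < n" for i using that xc unfolding v_def by simp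
  have Av: "A *\<^sub>v v = \<mu> \<cdot>\<^sub>v v" unfolding v_def using Ax Ac xc
    by (simp add: mult_mat_vec smult_smult_assoc mult.commute)
  define M where "M = mat n n (\<lambda>(i,j). if j < k then W $$ (i,j) else if j = k then v $ i else 0)"
  have oM: "orthcols n (Suc k) M" unfolding M_def
  proof (rule orth_add_col[OF Wc _ k])
    show "orthcols n k W" using oW k unfolding orthcols_def by auto
    show "(\<Sum>i<n. cnj (v $ i) * v $ i) = 1" using rn vi by simp
    show "(\<Sum>i<n. cnj (W $$ (i,j)) * v $ i) = 0" if "j < k" for j
    proof -
      have "(\<Sum>i<n. cnj (W $$ (i,j)) * v $ i) = (\<Sum>i<n. cnj (W $$ (i,j)) * x $ i) / complex_of_real r"
        using vi by (simp add: sum_divide_distrib)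
      then show ?thesis using xo[OF that] by simp
    qed
  qed
  have Mc: "M \<in> carrier_mat n n" unfolding M_def by simp
  obtain W' where W': "unitary_mat n W'" "\<forall>i<n. \<forall>j<Suc k. W' $$ (i,j) = M $$ (i,j)"
    using orth_extend[OF Mc oM] k by auto
  have W'c: "W' \<in> carrier_mat n n" using W' unfolding unitary_mat_def by auto
  define lam' where "lam' = lam(k := \<mu>)"
  have "A *\<^sub>v col W' j = lam' j \<cdot>\<^sub>v col W' j" if j: "j < Suc k" for j
  proof (cases "j < k")
    case True
    have "col W' j = col W j" using W'(2) j True k W'c Wc by (intro eq_vecI) (auto simp: M_def)
    then show ?thesis using eig[OF True] True by (simp add: lam'_def)
  next
    case False
    then have jk: "j = k" using j by simp
    have "col W' j = v" using W'(2) jk k W'c vc by (intro eq_vecI) (auto simp: M_def)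
    then show ?thesis using Av jk by (simp add: lam'_def)
  qed
  then show ?thesis using W'(1) by blast
qed


lemma eig_all:
  assumes A: "hermitian_mat n A" and k: "k \<le> n"
  shows "\<exists>W lam. unitary_mat n W \<and> (\<forall>j<k. A *\<^sub>v col W j = lam j \<cdot>\<^sub>v col W j)"
  using k
proof (induction k)
  case 0
  then show ?case using unitary_one by blast
next
  case (Suc k)
  then obtain W lam where "unitary_mat n W" "\<forall>j<k. A *\<^sub>v col W j = lam j \<cdot>\<^sub>v col W j" by auto
  then show ?case using eig_step[OF A, of W k lam] Suc(2) by auto
qed

lemma spectral:
  assumes A: "hermitian_mat n A"
  shows "\<exists>U d. unitary_mat n U \<and> A = U * real_diag n d * adj U"
proof -
  obtain W lam where W: "unitary_mat n W" and eig: "\<forall>j<n. A *\<^sub>v col W j = lam j \<cdot>\<^sub>v col W j"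
    using eig_all[OF A, of n] by auto
  have Ac: "A \<in> carrier_mat n n" and adjA: "adj A = A" using A unfolding hermitian_mat_def by auto
  have Wc: "W \<in> carrier_mat n n" and WW: "adj W * W = 1\<^sub>m n" using W unfolding unitary_mat_def by auto
  have WW': "W * adj W = 1\<^sub>m n" by (rule unitary_right[OF W])
  have aW: "adj W \<in> carrier_mat n n" using Wc by simp
  define Dg where "Dg = mat n n (\<lambda>(i,j). if i = j then lam i else 0)"
  have Dgc: "Dg \<in> carrier_mat n n" unfolding Dg_def by simp
  have AW: "A * W = W * Dg"
  proof (rule eq_matI)
    fix i j assume ij: "i < dim_row (W * Dg)" "j < dim_col (W * Dg)"
    then have i: "i < n" and j: "j < n" using Wc Dgc by auto
    have "(A * W) $$ (i,j) = (A *\<^sub>v col W j) $ i" using i j Ac Wc by simp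
    also have "\<dots> = lam j * W $$ (i,j)" using eig j i Wc by simp
    also have "\<dots> = (\<Sum>t<n. W $$ (i,t) * Dg $$ (t,j))"
    proof -
      have "(\<Sum>t<n. W $$ (i,t) * Dg $$ (t,j)) = (\<Sum>t<n. if t = j then W $$ (i,j) * lam j else 0)"
        by (rule sum.cong) (use j in \<open>auto simp: Dg_def\<close>)
      also have "\<dots> = W $$ (i,j) * lam j" using j by simp
      finally show ?thesis by simp
    qed
    also have "\<dots> = (W * Dg) $$ (i,j)" using i j Wc Dgc by (simp add: scalar_prod_def row_def col_def lessThan_atLeast0)
    finally show "(A * W) $$ (i,j) = (W * Dg) $$ (i,j)" .
  qed (use Ac Wc Dgc in auto)
  define C where "C = adj W * A * W"
  have CD: "C = Dg"
  proof -
    have "C = adj W * (A * W)" unfolding C_def by (rule assoc_mult_mat[OF aW Ac Wc])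
    also have "\<dots> = (adj W * W) * Dg" unfolding AW using assoc_mult_mat[OF aW Wc Dgc] by simp
    also have "\<dots> = Dg" using WW Dgc by simp
    finally show ?thesis .
  qed
  have adjC: "adj C = C"
  proof -
    have aWA: "adj W * A \<in> carrier_mat n n" using aW Ac by simp
    have "adj C = adj W * adj (adj W * A)" unfolding C_def by (rule adj_mult[OF aWA Wc])
    also have "\<dots> = adj W * (A * W)" using adj_mult[OF aW Ac] adjA by simp
    also have "\<dots> = C" unfolding C_def by (rule assoc_mult_mat[OF aW Ac Wc, symmetric])
    finally show ?thesis .
  qed
  have real: "lam j = complex_of_real (Re (lam j))" if j: "j < n" for j
  proof -
    have "adj Dg $$ (j,j) = Dg $$ (j,j)" using adjC CD by simp
    then have "cnj (lam j) = lam j" using j unfolding Dg_def by simp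
    then show ?thesis by (metis Reals_cnj_iff of_real_Re)
  qed
  define d where "d = (\<lambda>i. Re (lam i))"
  have Dd: "Dg = real_diag n d"
    unfolding Dg_def real_diag_def d_def by (rule eq_matI) (use real in auto)
  have "A = A * (W * adj W)" using WW' Ac by simp
  also have "\<dots> = A * W * adj W" by (rule assoc_mult_mat[OF Ac Wc aW, symmetric])
  also have "\<dots> = W * real_diag n d * adj W" unfolding AW Dd ..
  finally show ?thesis using W by blast
qed


lemma real_diag_carrier[simp]: "real_diag n d \<in> carrier_mat n n"
  unfolding real_diag_def by simp

lemma real_diag_dims[simp]: "dim_row (real_diag n d) = n" "dim_col (real_diag n d) = n"
  unfolding real_diag_def by simp_all

lemma mult_real_diag_right:
  assumes "X \<in> carrier_mat m n" "i < m" "j < n"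
  shows "(X * real_diag n d) $$ (i,j) = X $$ (i,j) * complex_of_real (d j)"
proof -
  have "(X * real_diag n d) $$ (i,j) = (\<Sum>t<n. X $$ (i,t) * real_diag n d $$ (t,j))"
    using assms by (simp add: scalar_prod_def row_def col_def lessThan_atLeast0)
  also have "\<dots> = (\<Sum>t<n. if t = j then X $$ (i,j) * complex_of_real (d j) else 0)"
    by (rule sum.cong) (use assms in \<open>auto simp: real_diag_def\<close>)
  also have "\<dots> = X $$ (i,j) * complex_of_real (d j)" using assms by simp
  finally show ?thesis .
qed

lemma mult_real_diag_left:
  assumes "X \<in> carrier_mat n m" "i < n" "j < m"
  shows "(real_diag n d * X) $$ (i,j) = complex_of_real (d i) * X $$ (i,j)"
proof -
  have "(real_diag n d * X) $$ (i,j) = (\<Sum>t<n. real_diag n d $$ (i,t) * X $$ (t,j))"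
    using assms by (simp add: scalar_prod_def row_def col_def lessThan_atLeast0)
  also have "\<dots> = (\<Sum>t<n. if t = i then complex_of_real (d i) * X $$ (i,j) else 0)"
    by (rule sum.cong) (use assms in \<open>auto simp: real_diag_def\<close>)
  also have "\<dots> = complex_of_real (d i) * X $$ (i,j)" using assms by simp
  finally show ?thesis .
qed

lemma fc_unique:
  assumes U: "unitary_mat n U" and V: "unitary_mat n V"
    and eq: "U * real_diag n d * adj U = V * real_diag n e * adj V"
  shows "U * real_diag n (\<lambda>i. f (d i)) * adj U = V * real_diag n (\<lambda>i. f (e i)) * adj V"
proof -
  have Uc: "U \<in> carrier_mat n n" and UU: "adj U * U = 1\<^sub>m n" using U unfolding unitary_mat_def by auto
  have Vc: "V \<in> carrier_mat n n" and VV: "adj V * V = 1\<^sub>m n" using V unfolding unitary_mat_def by auto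
  have UU': "U * adj U = 1\<^sub>m n" by (rule unitary_right[OF U])
  have VV': "V * adj V = 1\<^sub>m n" by (rule unitary_right[OF V])
  have aU: "adj U \<in> carrier_mat n n" and aV: "adj V \<in> carrier_mat n n" using Uc Vc by auto
  have assoc: "\<And>X Y Z. X \<in> carrier_mat n n \<Longrightarrow> Y \<in> carrier_mat n n \<Longrightarrow> Z \<in> carrier_mat n n \<Longrightarrow> X * Y * Z = X * (Y * Z)"
    using assoc_mult_mat by blast
  have multc: "\<And>X Y. X \<in> carrier_mat n n \<Longrightarrow> Y \<in> carrier_mat n n \<Longrightarrow> X * Y \<in> carrier_mat n n"
    by simp
  have cU: "\<And>X. X \<in> carrier_mat n n \<Longrightarrow> adj U * (U * X) = X"
    using assoc[OF aU Uc] UU by simp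
  have cU': "\<And>X. X \<in> carrier_mat n n \<Longrightarrow> U * (adj U * X) = X"
    using assoc[OF Uc aU] UU' by simp
  have cV: "\<And>X. X \<in> carrier_mat n n \<Longrightarrow> adj V * (V * X) = X"
    using assoc[OF aV Vc] VV by simp
  have cV': "\<And>X. X \<in> carrier_mat n n \<Longrightarrow> V * (adj V * X) = X"
    using assoc[OF Vc aV] VV' by simp
  define X where "X = adj V * U"
  have Xc: "X \<in> carrier_mat n n" unfolding X_def using aV Uc by simp
  have "adj V * (U * real_diag n d * adj U) * U = adj V * (V * real_diag n e * adj V) * U"
    using eq by simp
  then have XD: "X * real_diag n d = real_diag n e * X"
    unfolding X_def using Uc Vc aU aV by (simp add: assoc multc cU cV UU)
  have XDf: "X * real_diag n (\<lambda>i. f (d i)) = real_diag n (\<lambda>i. f (e i)) * X"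
  proof (rule eq_matI)
    fix i j assume "i < dim_row (real_diag n (\<lambda>i. f (e i)) * X)" "j < dim_col (real_diag n (\<lambda>i. f (e i)) * X)"
    then have i: "i < n" and j: "j < n" using Xc by (auto simp: real_diag_def)
    have "X $$ (i,j) * complex_of_real (d j) = complex_of_real (e i) * X $$ (i,j)"
      using arg_cong[OF XD, of "\<lambda>M. M $$ (i,j)"] mult_real_diag_right[OF Xc i j] mult_real_diag_left[OF Xc i j] by simp
    then have "X $$ (i,j) = 0 \<or> d j = e i" by auto
    then have "X $$ (i,j) * complex_of_real (f (d j)) = complex_of_real (f (e i)) * X $$ (i,j)" by auto
    then show "(X * real_diag n (\<lambda>i. f (d i))) $$ (i,j) = (real_diag n (\<lambda>i. f (e i)) * X) $$ (i,j)"
      using mult_real_diag_right[OF Xc i j] mult_real_diag_left[OF Xc i j] by simp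
  qed (use Xc in \<open>auto simp: real_diag_def\<close>)
  have "U * real_diag n (\<lambda>i. f (d i)) * adj U = V * (X * real_diag n (\<lambda>i. f (d i)) * adj U)"
    unfolding X_def using Uc Vc aU aV by (simp add: assoc multc cV')
  also have "\<dots> = V * (real_diag n (\<lambda>i. f (e i)) * X * adj U)" unfolding XDf ..
  also have "\<dots> = V * real_diag n (\<lambda>i. f (e i)) * adj V"
    unfolding X_def using Uc Vc aU aV by (simp add: assoc multc UU')
  finally show ?thesis .
qed


lemma udu_carrier[simp]: "U \<in> carrier_mat n n \<Longrightarrow> U * real_diag n d * adj U \<in> carrier_mat n n"
  by (metis mult_carrier_mat real_diag_carrier adj_carrier)

lemma mtrace_comm:
  assumes A: "A \<in> carrier_mat n m" and B: "B \<in> carrier_mat m n"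
  shows "mtrace (A * B) = mtrace (B * A)"
proof -
  have "mtrace (A * B) = (\<Sum>i<n. \<Sum>j<m. A $$ (i,j) * B $$ (j,i))"
    unfolding mtrace_def using A B by (simp add: scalar_prod_def row_def col_def lessThan_atLeast0)
  also have "\<dots> = (\<Sum>j<m. \<Sum>i<n. B $$ (j,i) * A $$ (i,j))"
    by (subst sum.swap) (simp add: mult.commute)
  also have "\<dots> = mtrace (B * A)"
    unfolding mtrace_def using A B by (simp add: scalar_prod_def row_def col_def lessThan_atLeast0)
  finally show ?thesis .
qed

lemma eig_nonneg:
  assumes U: "unitary_mat n U" and A: "A = U * real_diag n d * adj U" and psd: "psd_mat n A" and j: "j < n"
  shows "d j \<ge> 0"
proof -
  have Uc: "U \<in> carrier_mat n n" and UU: "adj U * U = 1\<^sub>m n" using U unfolding unitary_mat_def by auto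
  have aU: "adj U \<in> carrier_mat n n" using Uc by simp
  have Ac: "A \<in> carrier_mat n n" unfolding A by (rule udu_carrier[OF Uc])
  have UDc: "U * real_diag n d \<in> carrier_mat n n" using Uc by (metis mult_carrier_mat real_diag_carrier)
  have AU: "A * U = U * real_diag n d"
  proof -
    have "A * U = U * real_diag n d * adj U * U" unfolding A ..
    also have "\<dots> = U * real_diag n d * (adj U * U)" by (rule assoc_mult_mat[OF UDc aU Uc])
    also have "\<dots> = U * real_diag n d" unfolding UU using UDc by simp
    finally show ?thesis .
  qed
  define v where "v = col U j"
  have vc: "v \<in> carrier_vec n" unfolding v_def by (rule col_carrier_vec[OF j Uc])
  have Av: "(A *\<^sub>v v) $ i = U $$ (i,j) * complex_of_real (d j)" if i: "i < n" for i
  proof -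
    have "(A *\<^sub>v v) $ i = (A * U) $$ (i,j)" unfolding v_def using i j Ac Uc by simp
    also have "\<dots> = U $$ (i,j) * complex_of_real (d j)" unfolding AU by (rule mult_real_diag_right[OF Uc i j])
    finally show ?thesis .
  qed
  have oU: "orthcols n n U" using unitary_iff_orthcols[OF Uc] U by simp
  have "(\<Sum>i<n. cnj (v $ i) * (A *\<^sub>v v) $ i) = (\<Sum>i<n. cnj (U $$ (i,j)) * U $$ (i,j) * complex_of_real (d j))"
  proof (rule sum.cong)
    fix i assume "i \<in> {..<n}"
    then have i: "i < n" by simp
    have "v $ i = U $$ (i,j)" unfolding v_def using i j Uc by simp
    then show "cnj (v $ i) * (A *\<^sub>v v) $ i = cnj (U $$ (i,j)) * U $$ (i,j) * complex_of_real (d j)"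
      using Av[OF i] by (simp add: mult.assoc)
  qed simp
  also have "\<dots> = (\<Sum>i<n. cnj (U $$ (i,j)) * U $$ (i,j)) * complex_of_real (d j)"
    by (simp add: sum_distrib_right)
  also have "\<dots> = complex_of_real (d j)" using oU j unfolding orthcols_def by simp
  finally have "(\<Sum>i<n. cnj (v $ i) * (A *\<^sub>v v) $ i) = complex_of_real (d j)" .
  moreover have "0 \<le> Re (\<Sum>i<n. cnj (v $ i) * (A *\<^sub>v v) $ i)"
  proof -
    have "\<forall>v \<in> carrier_vec n. 0 \<le> Re (\<Sum>i<n. cnj (v $ i) * (A *\<^sub>v v) $ i)"
      using psd unfolding psd_mat_def by auto
    then show ?thesis using vc by (rule bspec)
  qed
  ultimately show ?thesis by simp
qed

lemma trace_diag:
  assumes U: "unitary_mat n U"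
  shows "mtrace (U * real_diag n d * adj U) = complex_of_real (\<Sum>i<n. d i)"
proof -
  have Uc: "U \<in> carrier_mat n n" and UU: "adj U * U = 1\<^sub>m n" using U unfolding unitary_mat_def by auto
  have aU: "adj U \<in> carrier_mat n n" using Uc by simp
  have "mtrace (U * real_diag n d * adj U) = mtrace (adj U * (U * real_diag n d))"
    by (rule mtrace_comm[of _ n n]) (use Uc aU in auto)
  also have "\<dots> = mtrace (real_diag n d)"
    using assoc_mult_mat[OF aU Uc, of "real_diag n d" n] UU by simp
  also have "\<dots> = complex_of_real (\<Sum>i<n. d i)"
    unfolding mtrace_def real_diag_def by simp
  finally show ?thesis .
qed


lemma cnj_mult_self: "cnj z * z = complex_of_real ((cmod z)^2)"
  by (metis complex_norm_square mult.commute)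

lemma mult_cnj_self2: "z * cnj z = (complex_of_real (cmod z))^2"
  by (metis complex_norm_square of_real_power)

lemma unitary_weights:
  assumes X: "unitary_mat n X"
  shows "\<And>j. j < n \<Longrightarrow> (\<Sum>i<n. (cmod (X $$ (i,j)))^2) = 1"
    and "\<And>i. i < n \<Longrightarrow> (\<Sum>j<n. (cmod (X $$ (i,j)))^2) = 1"
proof -
  have Xc: "X \<in> carrier_mat n n" using X unfolding unitary_mat_def by auto
  have o1: "orthcols n n X" using unitary_iff_orthcols[OF Xc] X by simp
  have o2: "orthcols n n (adj X)" using unitary_iff_orthcols[of "adj X" n] unitary_adj[OF X] Xc by simp
  fix j assume j: "j < n"
  have "complex_of_real (\<Sum>i<n. (cmod (X $$ (i,j)))^2) = (\<Sum>i<n. cnj (X $$ (i,j)) * X $$ (i,j))"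
    by (simp add: cnj_mult_self)
  also have "\<dots> = 1" using o1 j unfolding orthcols_def by simp
  finally show "(\<Sum>i<n. (cmod (X $$ (i,j)))^2) = 1" by (simp only: of_real_eq_1_iff)
next
  have Xc: "X \<in> carrier_mat n n" using X unfolding unitary_mat_def by auto
  have o2: "orthcols n n (adj X)" using unitary_iff_orthcols[of "adj X" n] unitary_adj[OF X] Xc by simp
  fix i assume i: "i < n"
  have "complex_of_real (\<Sum>j<n. (cmod (X $$ (i,j)))^2) = (\<Sum>j<n. cnj (adj X $$ (j,i)) * adj X $$ (j,i))"
    unfolding of_real_sum
  proof (rule sum.cong)
    fix j assume "j \<in> {..<n}"
    then have "j < n" by simp
    then show "complex_of_real ((cmod (X $$ (i,j)))^2) = cnj (adj X $$ (j,i)) * adj X $$ (j,i)"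
      using i Xc by (simp add: mult_cnj_self2)
  qed simp
  also have "\<dots> = 1" using o2 i unfolding orthcols_def by simp
  finally show "(\<Sum>j<n. (cmod (X $$ (i,j)))^2) = 1" by (simp only: of_real_eq_1_iff)
qed

lemma unitary_mult:
  assumes U: "unitary_mat n U" and V: "unitary_mat n V"
  shows "unitary_mat n (adj U * V)"
proof -
  have Uc: "U \<in> carrier_mat n n" and Vc: "V \<in> carrier_mat n n" using U V unfolding unitary_mat_def by auto
  have aU: "adj U \<in> carrier_mat n n" and aV: "adj V \<in> carrier_mat n n" using Uc Vc by auto
  have VV: "adj V * V = 1\<^sub>m n" using V unfolding unitary_mat_def by auto
  have UU': "U * adj U = 1\<^sub>m n" by (rule unitary_right[OF U])
  have cU': "\<And>X. X \<in> carrier_mat n n \<Longrightarrow> U * (adj U * X) = X"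
    using assoc_mult_mat[OF Uc aU] UU' by simp
  have AVc: "adj U * V \<in> carrier_mat n n" using aU Vc by simp
  have "adj (adj U * V) = adj V * U" using adj_mult[OF aU Vc] by simp
  then have "adj (adj U * V) * (adj U * V) = adj V * U * (adj U * V)" by simp
  also have "\<dots> = adj V * (U * (adj U * V))" by (rule assoc_mult_mat[OF aV Uc AVc])
  also have "\<dots> = 1\<^sub>m n" using cU'[OF Vc] VV by simp
  finally show ?thesis unfolding unitary_mat_def using AVc by simp
qed

lemma trace_formula:
  assumes U: "unitary_mat n U" and V: "unitary_mat n V"
  shows "mtrace (U * real_diag n a * adj U * (V * real_diag n b * adj V)) =
    complex_of_real (\<Sum>i<n. \<Sum>j<n. a i * b j * (cmod ((adj U * V) $$ (i,j)))^2)"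
proof -
  have Uc: "U \<in> carrier_mat n n" and Vc: "V \<in> carrier_mat n n" using U V unfolding unitary_mat_def by auto
  have aU: "adj U \<in> carrier_mat n n" and aV: "adj V \<in> carrier_mat n n" using Uc Vc by auto
  have assoc: "\<And>X Y Z. X \<in> carrier_mat n n \<Longrightarrow> Y \<in> carrier_mat n n \<Longrightarrow> Z \<in> carrier_mat n n \<Longrightarrow> X * Y * Z = X * (Y * Z)"
    using assoc_mult_mat by blast
  have multc: "\<And>X Y. X \<in> carrier_mat n n \<Longrightarrow> Y \<in> carrier_mat n n \<Longrightarrow> X * Y \<in> carrier_mat n n"
    by simp
  define X where "X = adj U * V"
  define Y where "Y = adj V * U"
  have Xc: "X \<in> carrier_mat n n" and Yc: "Y \<in> carrier_mat n n" unfolding X_def Y_def using aU aV Uc Vc by auto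
  have YX: "Y $$ (j,i) = cnj (X $$ (i,j))" if "i < n" "j < n" for i j
  proof -
    have "Y = adj X" unfolding X_def Y_def using adj_mult[OF aU Vc] by simp
    then show ?thesis using that Xc by simp
  qed
  define R where "R = real_diag n a * (adj U * (V * (real_diag n b * adj V)))"
  have Rc: "R \<in> carrier_mat n n" unfolding R_def using aU aV Vc by (simp add: multc)
  have "U * real_diag n a * adj U * (V * real_diag n b * adj V) = U * R"
    unfolding R_def using Uc Vc aU aV by (simp add: assoc multc)
  then have "mtrace (U * real_diag n a * adj U * (V * real_diag n b * adj V)) = mtrace (R * U)"
    using mtrace_comm[OF Uc Rc] by simp
  also have "R * U = real_diag n a * (X * (real_diag n b * Y))"
    unfolding R_def X_def Y_def using Uc Vc aU aV by (simp add: assoc multc)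
  also have "mtrace (real_diag n a * (X * (real_diag n b * Y))) =
     (\<Sum>i<n. complex_of_real (a i) * (\<Sum>j<n. X $$ (i,j) * (complex_of_real (b j) * Y $$ (j,i))))"
  proof -
    have XbY: "X * (real_diag n b * Y) \<in> carrier_mat n n" using Xc Yc by (simp add: multc)
    have "mtrace (real_diag n a * (X * (real_diag n b * Y))) = (\<Sum>i<n. (real_diag n a * (X * (real_diag n b * Y))) $$ (i,i))"
      unfolding mtrace_def using XbY by simp
    also have "\<dots> = (\<Sum>i<n. complex_of_real (a i) * (X * (real_diag n b * Y)) $$ (i,i))"
      by (rule sum.cong) (use mult_real_diag_left[OF XbY] in auto)
    also have "\<dots> = (\<Sum>i<n. complex_of_real (a i) * (\<Sum>j<n. X $$ (i,j) * (complex_of_real (b j) * Y $$ (j,i))))"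
    proof (rule sum.cong)
      fix i assume "i \<in> {..<n}" then have i: "i < n" by simp
      have bYc: "real_diag n b * Y \<in> carrier_mat n n" using Yc by (simp add: multc)
      have "(X * (real_diag n b * Y)) $$ (i,i) = (\<Sum>j<n. X $$ (i,j) * (real_diag n b * Y) $$ (j,i))"
        using i Xc Yc bYc by (simp add: scalar_prod_def row_def col_def lessThan_atLeast0)
      also have "\<dots> = (\<Sum>j<n. X $$ (i,j) * (complex_of_real (b j) * Y $$ (j,i)))"
        by (rule sum.cong) (use mult_real_diag_left[OF Yc] i in auto)
      finally show "complex_of_real (a i) * (X * (real_diag n b * Y)) $$ (i,i) = complex_of_real (a i) * (\<Sum>j<n. X $$ (i,j) * (complex_of_real (b j) * Y $$ (j,i)))"
        by simp
    qed simp
    finally show ?thesis .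
  qed
  also have "\<dots> = complex_of_real (\<Sum>i<n. \<Sum>j<n. a i * b j * (cmod (X $$ (i,j)))^2)"
  proof -
    have key: "\<And>i j. i < n \<Longrightarrow> j < n \<Longrightarrow> complex_of_real (a i) * (X $$ (i,j) * (complex_of_real (b j) * Y $$ (j,i))) = complex_of_real (a i * b j * (cmod (X $$ (i,j)))^2)"
    proof -
      fix i j assume ij: "i < n" "j < n"
      have "complex_of_real (a i) * (X $$ (i,j) * (complex_of_real (b j) * Y $$ (j,i)))
          = complex_of_real (a i) * complex_of_real (b j) * (X $$ (i,j) * cnj (X $$ (i,j)))"
        unfolding YX[OF ij] by (simp only: mult_ac)
      also have "X $$ (i,j) * cnj (X $$ (i,j)) = complex_of_real ((cmod (X $$ (i,j)))^2)"
        by (rule complex_norm_square[symmetric])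
      finally show "complex_of_real (a i) * (X $$ (i,j) * (complex_of_real (b j) * Y $$ (j,i))) = complex_of_real (a i * b j * (cmod (X $$ (i,j)))^2)"
        by (simp only: of_real_mult)
    qed
    show ?thesis unfolding of_real_sum sum_distrib_left
      by (intro sum.cong refl) (simp add: key)
  qed
  finally show ?thesis unfolding X_def .
qed


lemma young0:
  fixes u v t :: real
  assumes "u \<ge> 0" "v \<ge> 0" "0 < t" "t < 1"
  shows "u powr t * v powr (1-t) \<le> t*u + (1-t)*v"
proof (cases "u = 0 \<or> v = 0")
  case True
  then show ?thesis using assms by auto
next
  case False
  then show ?thesis using assms Youngs_inequality_0[of t "1-t" u v] by auto
qed

lemma term_split:
  fixes c a b x y t :: real
  assumes "c \<ge> 0" "a > 0" "b > 0"
  shows "c * a powr (t*x+(1-t)*y) * b powr (1-(t*x+(1-t)*y)) =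
    (c * a powr x * b powr (1-x)) powr t * (c * a powr y * b powr (1-y)) powr (1-t)"
proof (cases "c = 0")
  case True then show ?thesis by simp
next
  case False
  then have c: "c > 0" using assms by auto
  have "c * a powr (t*x+(1-t)*y) * b powr (1-(t*x+(1-t)*y)) = exp (ln c + (t*x+(1-t)*y) * ln a + (1-(t*x+(1-t)*y)) * ln b)"
    using c assms by (simp add: powr_def exp_add)
  also have "\<dots> = exp (t * (ln c + x * ln a + (1-x) * ln b) + (1-t) * (ln c + y * ln a + (1-y) * ln b))"
    by (simp add: algebra_simps)
  also have "\<dots> = (c * a powr x * b powr (1-x)) powr t * (c * a powr y * b powr (1-y)) powr (1-t)"
    using c assms by (simp add: powr_def exp_add ln_mult)
  finally show ?thesis .
qed

lemma logconv:
  fixes K :: "'k set" and c a b :: "'k \<Rightarrow> real" and t x y :: real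
  assumes fin: "finite K" and pos: "\<And>k. k\<in>K \<Longrightarrow> c k \<ge> 0 \<and> a k > 0 \<and> b k > 0"
    and t: "0<t" "t<1"
  shows "(\<Sum>k\<in>K. c k * a k powr (t*x+(1-t)*y) * b k powr (1-(t*x+(1-t)*y)))
     \<le> (\<Sum>k\<in>K. c k * a k powr x * b k powr (1-x)) powr t * (\<Sum>k\<in>K. c k * a k powr y * b k powr (1-y)) powr (1-t)"
proof -
  define T where "T = (\<lambda>s k. c k * a k powr s * b k powr (1-s))"
  have Tnn: "T s k \<ge> 0" if "k \<in> K" for s k using pos[OF that] unfolding T_def by auto
  have Tsplit: "T (t*x+(1-t)*y) k = T x k powr t * T y k powr (1-t)" if "k\<in>K" for k
    using term_split[of "c k" "a k" "b k" t x y] pos[OF that] unfolding T_def by auto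
  have Tzero: "T s k = 0 \<longleftrightarrow> c k = 0" if "k\<in>K" for s k
    using pos[OF that] unfolding T_def by auto
  define X where "X = sum (T x) K"
  define Y where "Y = sum (T y) K"
  have X0: "X \<ge> 0" "Y \<ge> 0" unfolding X_def Y_def by (auto intro!: sum_nonneg Tnn)
  have goal: "sum (T (t*x+(1-t)*y)) K \<le> X powr t * Y powr (1-t)"
  proof (cases "X = 0 \<or> Y = 0")
    case True
    then obtain s where s: "sum (T s) K = 0" unfolding X_def Y_def by blast
    have "\<forall>k\<in>K. T s k = 0" using s fin Tnn sum_nonneg_eq_0_iff by blast
    then have "\<forall>k\<in>K. c k = 0" using Tzero by blast
    then have "sum (T (t*x+(1-t)*y)) K = 0" unfolding T_def by simp
    then show ?thesis using X0 by simp
  next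
    case False
    then have Xp: "X > 0" "Y > 0" using X0 by auto
    have "sum (T (t*x+(1-t)*y)) K = (\<Sum>k\<in>K. X powr t * Y powr (1-t) * ((T x k / X) powr t * (T y k / Y) powr (1-t)))"
    proof (rule sum.cong)
      fix k assume k: "k \<in> K"
      show "T (t*x+(1-t)*y) k = X powr t * Y powr (1-t) * ((T x k / X) powr t * (T y k / Y) powr (1-t))"
        using Tsplit[OF k] Tnn[OF k, of x] Tnn[OF k, of y] Xp
        by (simp add: powr_divide powr_gt_zero)
    qed simp
    also have "\<dots> \<le> (\<Sum>k\<in>K. X powr t * Y powr (1-t) * (t * (T x k / X) + (1-t) * (T y k / Y)))"
      by (intro sum_mono mult_left_mono young0) (use Tnn Xp t in auto)
    also have "\<dots> = X powr t * Y powr (1-t) * (t * (sum (T x) K / X) + (1-t) * (sum (T y) K / Y))"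
      by (simp add: sum_distrib_left sum_distrib_right sum.distrib sum_divide_distrib[symmetric] algebra_simps)
    also have "\<dots> = X powr t * Y powr (1-t)" using Xp unfolding X_def[symmetric] Y_def[symmetric] by simp
    finally show ?thesis .
  qed
  then show ?thesis unfolding T_def X_def Y_def by simp
qed


lemma scalar_main:
  fixes F :: "real \<Rightarrow> real" and \<alpha> \<beta> :: real
  assumes nn: "\<And>s. F s \<ge> 0"
    and lc: "\<And>t x y. 0 < t \<Longrightarrow> t < 1 \<Longrightarrow> F (t*x+(1-t)*y) \<le> F x powr t * F y powr (1-t)"
    and F0: "F 0 \<le> 1" and F1: "F 1 \<le> 1"
    and z: "F \<beta> = 0 \<Longrightarrow> F \<alpha> = 0"
    and a: "0 < \<alpha>" "\<alpha> < 1" and b: "0 < \<beta>" "\<beta> < 1"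
  shows "(if F \<alpha> = 0 then \<infinity> else ereal (ln (F \<alpha>) / (\<alpha> - 1))) \<ge>
     ereal (\<alpha> * (1 - \<beta>) / (\<alpha> - 2 * \<alpha> * \<beta> + \<beta>)) * (if F \<beta> = 0 then \<infinity> else ereal (ln (F \<beta>) / (\<beta> - 1)))"
proof -
  define cc where "cc = \<alpha> * (1 - \<beta>) / (\<alpha> - 2 * \<alpha> * \<beta> + \<beta>)"
  have den: "\<alpha> - 2 * \<alpha> * \<beta> + \<beta> = \<alpha> * (1-\<beta>) + \<beta> * (1-\<alpha>)" by (simp add: algebra_simps)
  have denp: "\<alpha> * (1-\<beta>) + \<beta> * (1-\<alpha>) > 0" using a b by (simp add: add_pos_pos)
  have ccp: "cc > 0" unfolding cc_def den using a b denp by simp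
  have cc1: "cc \<le> 1" unfolding cc_def den using a b denp by (simp add: mult_pos_pos)
  show ?thesis
  proof (cases "F \<alpha> = 0")
    case True then show ?thesis by simp
  next
    case Fa: False
    then have Fb: "F \<beta> \<noteq> 0" using z by blast
    have Fap: "F \<alpha> > 0" and Fbp: "F \<beta> > 0" using Fa Fb nn[of \<alpha>] nn[of \<beta>] by auto
    have "F \<beta> \<le> F 1 powr \<beta> * F 0 powr (1-\<beta>)" using lc[OF b, of 1 0] by simp
    also have "\<dots> \<le> 1 * 1"
      by (intro mult_mono) (use nn F0 F1 b in \<open>auto intro!: powr_le1 powr_ge_zero\<close>)
    finally have Fb1: "F \<beta> \<le> 1" by simp
    define M where "M = - ln (F \<beta>)"
    have M0: "M \<ge> 0" unfolding M_def using Fb1 Fbp by simp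
    have key: "- ln (F \<alpha>) / (1 - \<alpha>) \<ge> cc * (M / (1 - \<beta>))"
    proof (cases "\<alpha> \<le> \<beta>")
      case True
      define t where "t = \<alpha> / \<beta>"
      have t: "0 < t" "t \<le> 1" unfolding t_def using a b True by auto
      have "F \<alpha> \<le> F \<beta> powr t"
      proof (cases "t = 1")
        case True then have "\<alpha> = \<beta>" unfolding t_def using b by simp
        then show ?thesis using True Fbp by simp
      next
        case False
        then have t1: "t < 1" using t by simp
        have "F \<alpha> = F (t*\<beta> + (1-t)*0)" unfolding t_def using b by simp
        also have "\<dots> \<le> F \<beta> powr t * F 0 powr (1-t)" by (rule lc[OF t(1) t1])
        also have "\<dots> \<le> F \<beta> powr t * 1"
          by (intro mult_left_mono) (use nn F0 t1 in \<open>auto intro!: powr_le1\<close>)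
        finally show ?thesis by simp
      qed
      moreover have pp: "F \<beta> powr t > 0" using Fbp by simp
      ultimately have "ln (F \<alpha>) \<le> ln (F \<beta> powr t)" using ln_le_cancel_iff[OF Fap pp] by blast
      then have la: "- ln (F \<alpha>) \<ge> t * M" unfolding M_def using Fbp by (simp add: ln_powr)
      have "cc * (M / (1 - \<beta>)) = \<alpha> * M / (\<alpha> * (1-\<beta>) + \<beta> * (1-\<alpha>))"
      proof -
        define D where "D = \<alpha> * (1-\<beta>) + \<beta> * (1-\<alpha>)"
        have D: "D \<noteq> 0" "1 - \<beta> \<noteq> 0" using denp b unfolding D_def by auto
        have "cc * (M / (1 - \<beta>)) = \<alpha> * (1-\<beta>) / D * (M / (1 - \<beta>))" unfolding cc_def den D_def by simp
        also have "\<dots> = \<alpha> * M / D" using D by (simp add: field_simps)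
        finally show ?thesis unfolding D_def .
      qed
      also have "\<dots> \<le> \<alpha> * M / (\<beta> * (1-\<alpha>))"
        by (rule divide_left_mono) (use a b M0 denp in \<open>auto intro!: mult_pos_pos mult_nonneg_nonneg\<close>)
      also have "\<dots> = t * M / (1 - \<alpha>)" unfolding t_def using a b by (simp add: field_simps)
      also have "\<dots> \<le> - ln (F \<alpha>) / (1 - \<alpha>)" by (rule divide_right_mono[OF la]) (use a in simp)
      finally show ?thesis .
    next
      case False
      define t where "t = (\<alpha> - \<beta>) / (1 - \<beta>)"
      have t: "0 < t" "t < 1" unfolding t_def using a b False by auto
      have ta: "t*1 + (1-t)*\<beta> = \<alpha>"
      proof -
        have ne: "1 - \<beta> \<noteq> 0" using b by simp
        have h: "(1-\<beta>)*t = \<alpha> - \<beta>" unfolding t_def using ne by simp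
        have "(1-\<beta>)*(t*1+(1-t)*\<beta>) = ((1-\<beta>)*t)*(1-\<beta>) + \<beta>*(1-\<beta>)" by (simp add: algebra_simps)
        also have "\<dots> = (1-\<beta>)*\<alpha>" unfolding h by (simp add: algebra_simps)
        finally show ?thesis using ne by simp
      qed
      have "F \<alpha> = F (t*1 + (1-t)*\<beta>)" by (simp only: ta)
      also have "\<dots> \<le> F 1 powr t * F \<beta> powr (1-t)" by (rule lc[OF t])
      also have "\<dots> \<le> 1 * F \<beta> powr (1-t)"
        by (intro mult_right_mono) (use nn F1 t in \<open>auto intro!: powr_le1\<close>)
      finally have "F \<alpha> \<le> F \<beta> powr (1-t)" by simp
      moreover have pp: "F \<beta> powr (1-t) > 0" using Fbp by simp
      ultimately have "ln (F \<alpha>) \<le> ln (F \<beta> powr (1-t))" using ln_le_cancel_iff[OF Fap pp] by blast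
      then have la: "- ln (F \<alpha>) \<ge> (1-t) * M" unfolding M_def using Fbp by (simp add: ln_powr)
      have "1 - t = (1-\<alpha>)/(1-\<beta>)" unfolding t_def using b by (simp add: field_simps)
      then have "(1-t) * M / (1-\<alpha>) = ((1-\<alpha>)/(1-\<beta>)) * M / (1-\<alpha>)" by simp
      also have "\<dots> = M / (1-\<beta>)" using a b by simp
      finally have "(1-t) * M / (1-\<alpha>) = M / (1-\<beta>)" .
      moreover have "(1-t) * M / (1-\<alpha>) \<le> - ln (F \<alpha>) / (1 - \<alpha>)" by (rule divide_right_mono[OF la]) (use a in simp)
      moreover have "cc * (M / (1 - \<beta>)) \<le> M / (1 - \<beta>)"
        by (rule mult_left_le_one_le) (use cc1 ccp M0 b in auto)
      ultimately show ?thesis by linarith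
    qed
    have e1: "ln (F \<alpha>) / (\<alpha> - 1) = - ln (F \<alpha>) / (1 - \<alpha>)" by (simp add: divide_simps) (simp add: algebra_simps)
    have e2: "ln (F \<beta>) / (\<beta> - 1) = M / (1 - \<beta>)" unfolding M_def by (simp add: divide_simps) (simp add: algebra_simps)
    show ?thesis using Fa Fb key unfolding cc_def[symmetric] e1 e2 by simp
  qed
qed


lemma mat_powr_eq:
  assumes U: "unitary_mat n U" and A: "A = U * real_diag n d * adj U"
  shows "mat_powr n A p = U * real_diag n (\<lambda>i. if d i > 0 then d i powr p else 0) * adj U"
proof -
  define P where "P = (\<lambda>B. \<exists>U d. unitary_mat n U \<and> A = U * real_diag n d * adj U \<and>
      B = U * real_diag n (\<lambda>i. if d i > 0 then d i powr p else 0) * adj U)"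
  have "P (U * real_diag n (\<lambda>i. if d i > 0 then d i powr p else 0) * adj U)"
    unfolding P_def using U A by blast
  then have "P (SOME B. P B)" by (rule someI)
  then obtain U' d' where U': "unitary_mat n U'" and A': "A = U' * real_diag n d' * adj U'"
    and S: "(SOME B. P B) = U' * real_diag n (\<lambda>i. if d' i > 0 then d' i powr p else 0) * adj U'"
    unfolding P_def by blast
  have "U' * real_diag n (\<lambda>i. (\<lambda>x. if x > 0 then x powr p else 0) (d' i)) * adj U' =
        U * real_diag n (\<lambda>i. (\<lambda>x. if x > 0 then x powr p else 0) (d i)) * adj U"
    by (rule fc_unique[OF U' U]) (use A A' in simp)
  then show ?thesis unfolding mat_powr_def P_def[symmetric] S by simp
qed

lemma density_decomp:
  assumes "density_mat n A"
  shows "\<exists>U d. unitary_mat n U \<and> A = U * real_diag n d * adj U \<and> (\<forall>i<n. d i \<ge> 0) \<and> (\<Sum>i<n. d i) = 1"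
proof -
  have psd: "psd_mat n A" and tr: "mtrace A = 1" using assms unfolding density_mat_def by auto
  then have "hermitian_mat n A" unfolding psd_mat_def by auto
  then obtain U d where U: "unitary_mat n U" and A: "A = U * real_diag n d * adj U" using spectral by blast
  have "\<forall>i<n. d i \<ge> 0" using eig_nonneg[OF U A psd] by blast
  moreover have "complex_of_real (\<Sum>i<n. d i) = 1" using trace_diag[OF U, of d] tr A by simp
  then have "(\<Sum>i<n. d i) = 1" by (simp only: of_real_eq_1_iff)
  ultimately show ?thesis using U A by blast
qed

theorem mainTheorem13:
  fixes n :: nat and \<rho> \<sigma> :: "complex mat" and \<alpha> \<beta> :: real
  assumes "density_mat n \<rho>" and "density_mat n \<sigma>"
    and "0 < \<alpha>" and "\<alpha> < 1" and "0 < \<beta>" and "\<beta> < 1"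
  shows "petz_renyi n \<alpha> \<rho> \<sigma> \<ge>
           ereal (\<alpha> * (1 - \<beta>) / (\<alpha> - 2 * \<alpha> * \<beta> + \<beta>)) * petz_renyi n \<beta> \<rho> \<sigma>"
proof -
  obtain U p where U: "unitary_mat n U" and rho: "\<rho> = U * real_diag n p * adj U"
    and p0: "\<forall>i<n. p i \<ge> 0" and p1: "(\<Sum>i<n. p i) = 1"
    using density_decomp[OF assms(1)] by blast
  obtain V q where V: "unitary_mat n V" and sigma: "\<sigma> = V * real_diag n q * adj V"
    and q0: "\<forall>i<n. q i \<ge> 0" and q1: "(\<Sum>i<n. q i) = 1"
    using density_decomp[OF assms(2)] by blast
  define w where "w = (\<lambda>i j. (cmod ((adj U * V) $$ (i,j)))^2)"
  have W: "unitary_mat n (adj U * V)" by (rule unitary_mult[OF U V])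
  have wcol: "(\<Sum>i<n. w i j) = 1" if "j < n" for j unfolding w_def using unitary_weights(1)[OF W that] .
  have wrow: "(\<Sum>j<n. w i j) = 1" if "i < n" for i unfolding w_def using unitary_weights(2)[OF W that] .
  have w0: "w i j \<ge> 0" for i j unfolding w_def by simp
  define G where "G = (\<lambda>s. \<Sum>i<n. \<Sum>j<n. (if p i > 0 then p i powr s else 0) * (if q j > 0 then q j powr (1-s) else 0) * w i j)"
  have trG: "Re (mtrace (mat_powr n \<rho> s * mat_powr n \<sigma> (1 - s))) = G s" for s
    unfolding mat_powr_eq[OF U rho] mat_powr_eq[OF V sigma] trace_formula[OF U V] G_def w_def by simp
  define K where "K = {..<n} \<times> {..<n}"
  define c where "c = (\<lambda>(i,j). if p i > 0 \<and> q j > 0 then w i j else 0)"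
  define a where "a = (\<lambda>(i::nat,j::nat). if p i > 0 then p i else 1)"
  define b where "b = (\<lambda>(i::nat,j::nat). if q j > 0 then q j else 1)"
  have pos: "c k \<ge> 0 \<and> a k > 0 \<and> b k > 0" if "k \<in> K" for k
    unfolding c_def a_def b_def using w0 by (auto split: prod.splits)
  have GF: "G s = (\<Sum>k\<in>K. c k * a k powr s * b k powr (1-s))" for s
  proof -
    have "G s = (\<Sum>(i,j)\<in>K. (if p i > 0 then p i powr s else 0) * (if q j > 0 then q j powr (1-s) else 0) * w i j)"
      unfolding G_def K_def by (simp add: sum.cartesian_product)
    also have "\<dots> = (\<Sum>k\<in>K. c k * a k powr s * b k powr (1-s))"
      by (rule sum.cong) (auto simp: c_def a_def b_def)
    finally show ?thesis .
  qed
  define F where "F = (\<lambda>s. \<Sum>k\<in>K. c k * a k powr s * b k powr (1-s))"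
  have finK: "finite K" unfolding K_def by simp
  have Fnn: "F s \<ge> 0" for s unfolding F_def by (intro sum_nonneg) (use pos in auto)
  have lc: "F (t*x+(1-t)*y) \<le> F x powr t * F y powr (1-t)" if "0 < t" "t < 1" for t x y
    unfolding F_def by (rule logconv[OF finK pos that])
  have F0: "F 0 \<le> 1"
  proof -
    have "F 0 = G 0" unfolding F_def GF ..
    also have "\<dots> \<le> (\<Sum>i<n. \<Sum>j<n. q j * w i j)"
      unfolding G_def
      by (intro sum_mono) (use p0 q0 w0 in \<open>auto intro!: mult_right_mono\<close>)
    also have "\<dots> = (\<Sum>j<n. q j * (\<Sum>i<n. w i j))"
      by (subst sum.swap) (simp add: sum_distrib_left)
    also have "\<dots> = (\<Sum>j<n. q j)" using wcol by simp
    finally show ?thesis using q1 by simp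
  qed
  have F1: "F 1 \<le> 1"
  proof -
    have "F 1 = G 1" unfolding F_def GF ..
    also have "\<dots> \<le> (\<Sum>i<n. \<Sum>j<n. p i * w i j)"
      unfolding G_def
      by (intro sum_mono) (use p0 q0 w0 in \<open>auto intro!: mult_right_mono\<close>)
    also have "\<dots> = (\<Sum>i<n. p i * (\<Sum>j<n. w i j))"
      by (simp add: sum_distrib_left)
    also have "\<dots> = (\<Sum>i<n. p i)" using wrow by simp
    finally show ?thesis using p1 by simp
  qed
  have z: "F \<alpha> = 0" if "F \<beta> = 0"
  proof -
    have "\<forall>k\<in>K. c k * a k powr \<beta> * b k powr (1-\<beta>) = 0"
      using that unfolding F_def by (subst sum_nonneg_eq_0_iff[OF finK, symmetric]) (use pos in auto)
    then have h: "\<forall>k\<in>K. c k = 0 \<or> a k = 0 \<or> b k = 0" by simp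
    have "\<forall>k\<in>K. c k = 0"
    proof
      fix k assume k: "k \<in> K"
      show "c k = 0" using h k pos[OF k] by auto
    qed
    then show ?thesis unfolding F_def by simp
  qed
  have FG: "Re (mtrace (mat_powr n \<rho> s * mat_powr n \<sigma> (1 - s))) = F s" for s
    unfolding trG GF F_def ..
  have "(if F \<alpha> = 0 then \<infinity> else ereal (ln (F \<alpha>) / (\<alpha> - 1))) \<ge>
     ereal (\<alpha> * (1 - \<beta>) / (\<alpha> - 2 * \<alpha> * \<beta> + \<beta>)) * (if F \<beta> = 0 then \<infinity> else ereal (ln (F \<beta>) / (\<beta> - 1)))"
    by (rule scalar_main[OF Fnn lc F0 F1 z assms(3-6)])
  then show ?thesis unfolding petz_renyi_def Let_def FG .
qed

end
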